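(* Let $n\ge 4$ be an even integer and let $k\ge 3$ and $m\ge 2$ be integers. Then the metric dimension of $(C_n\square P_k)\square P_m$ is $4$.
   Context: All graphs are finite and connected; $d(u,v)$ is the shortest-path distance. $C_n$ is the cycle on $n$ vertices and $P_k$ the path on $k$ vertices. The cartesian product $G\square H$ has vertex set $V(G)\times V(H)$, with $(g_1,h_1)$ adjacent to $(g_2,h_2)$ iff either $h_1=h_2$ and $g_1g_2\in E(G)$, or $g_1=g_2$ and $h_1h_2\in E(H)$. For an ordered set $Q=\{q_1,\dots,q_l\}$ of vertices, $r(x|Q)=(d(x,q_1),\dots,d(x,q_l))$. $Q$ is a resolving set of $G$ if any two distinct vertices of $G$ have distinct vectors $r(\cdot|Q)$; the metric dimension is the minimum size of a resolving set. *)

theory Defs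
  imports Main
begin

record 'a graph =
  verts :: "'a set"
  adj :: "'a \<Rightarrow> 'a \<Rightarrow> bool"

definition cycle_graph :: "nat \<Rightarrow> nat graph" where
  "cycle_graph n = \<lparr> verts = {0..<n},
     adj = (\<lambda>i j. i < n \<and> j < n \<and> i \<noteq> j \<and> ((i + 1) mod n = j \<or> (j + 1) mod n = i)) \<rparr>"

definition path_graph :: "nat \<Rightarrow> nat graph" where
  "path_graph k = \<lparr> verts = {0..<k},
     adj = (\<lambda>i j. i < k \<and> j < k \<and> (i + 1 = j \<or> j + 1 = i)) \<rparr>"

definition cart_prod :: "'a graph \<Rightarrow> 'b graph \<Rightarrow> ('a \<times> 'b) graph" where
  "cart_prod G H = \<lparr> verts = verts G \<times> verts H,
     adj = (\<lambda>(g1, h1) (g2, h2). (h1 = h2 \<and> adj G g1 g2) \<or> (g1 = g2 \<and> adj H h1 h2)) \<rparr>"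

text \<open>Walks as nonempty vertex lists; length of the walk = length xs - 1.\<close>
definition walk :: "'a graph \<Rightarrow> 'a list \<Rightarrow> bool" where
  "walk G xs \<longleftrightarrow> xs \<noteq> [] \<and> set xs \<subseteq> verts G \<and>
     (\<forall>i. Suc i < length xs \<longrightarrow> adj G (xs ! i) (xs ! Suc i))"

text \<open>Shortest-path distance (graphs considered are connected).\<close>
definition dist :: "'a graph \<Rightarrow> 'a \<Rightarrow> 'a \<Rightarrow> nat" where
  "dist G u v = (LEAST n. \<exists>xs. walk G xs \<and> hd xs = u \<and> last xs = v \<and> length xs = Suc n)"

definition resolving_set :: "'a graph \<Rightarrow> 'a set \<Rightarrow> bool" where
  "resolving_set G Q \<longleftrightarrow> Q \<subseteq> verts G \<and>
     (\<forall>x\<in>verts G. \<forall>y\<in>verts G. (\<forall>q\<in>Q. dist G x q = dist G y q) \<longrightarrow> x = y)"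

definition metric_dim :: "'a graph \<Rightarrow> nat" where
  "metric_dim G = (LEAST l. \<exists>Q. finite Q \<and> card Q = l \<and> resolving_set G Q)"

end

theory Submission
  imports Defs
begin



definition ad :: "nat \<Rightarrow> nat \<Rightarrow> nat" where "ad x y = (if x \<le> y then y - x else x - y)"
definition fd :: "nat \<Rightarrow> nat \<Rightarrow> nat \<Rightarrow> nat" where "fd n a p = (if a \<le> p then p - a else p + n - a)"
definition cd :: "nat \<Rightarrow> nat \<Rightarrow> nat \<Rightarrow> nat" where "cd n a p = min (fd n a p) (n - fd n a p)"
definition nx :: "nat \<Rightarrow> nat \<Rightarrow> nat" where "nx n a = (if a + 1 = n then 0 else a + 1)"
definition pv :: "nat \<Rightarrow> nat \<Rightarrow> nat" where "pv n a = (if a = 0 then n - 1 else a - 1)"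
definition anti :: "nat \<Rightarrow> nat \<Rightarrow> nat" where "anti h p = (if p < h then p + h else p - h)"

lemma fd_lt: "a < n \<Longrightarrow> p < n \<Longrightarrow> fd n a p < n" unfolding fd_def by auto
lemma fd_zero: "a < n \<Longrightarrow> p < n \<Longrightarrow> fd n a p = 0 \<longleftrightarrow> a = p" unfolding fd_def by auto
lemma fd_nx: "a < n \<Longrightarrow> p < n \<Longrightarrow> fd n (nx n a) p = (if fd n a p = 0 then n - 1 else fd n a p - 1)"
  unfolding fd_def nx_def by auto
lemma fd_pv: "a < n \<Longrightarrow> p < n \<Longrightarrow> fd n (pv n a) p = (if fd n a p = n - 1 then 0 else fd n a p + 1)"
  unfolding fd_def pv_def by auto
lemma fd_anti_iff: "n = 2*h \<Longrightarrow> p < n \<Longrightarrow> q < n \<Longrightarrow> fd n p q = h \<longleftrightarrow> q = anti h p"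
  unfolding fd_def anti_def by auto
lemma anti_lt: "n = 2*h \<Longrightarrow> p < n \<Longrightarrow> anti h p < n" unfolding anti_def by auto
lemma anti_anti: "n = 2*h \<Longrightarrow> p < n \<Longrightarrow> anti h (anti h p) = p" unfolding anti_def by auto
lemma anti_ne: "0 < h \<Longrightarrow> anti h p \<noteq> p" unfolding anti_def by auto
lemma nx_lt: "a < n \<Longrightarrow> nx n a < n" unfolding nx_def by auto
lemma pv_lt: "a < n \<Longrightarrow> pv n a < n" unfolding pv_def by auto
lemma nx_ne: "2 \<le> n \<Longrightarrow> a < n \<Longrightarrow> nx n a \<noteq> a" unfolding nx_def by auto
lemma pv_ne: "2 \<le> n \<Longrightarrow> a < n \<Longrightarrow> pv n a \<noteq> a" unfolding pv_def by auto
lemma nx_pv_ne: "3 \<le> n \<Longrightarrow> a < n \<Longrightarrow> nx n a \<noteq> pv n a" unfolding nx_def pv_def by auto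
lemma nx_mod: "a < n \<Longrightarrow> (a + 1) mod n = nx n a" unfolding nx_def by auto
lemma pv_mod: "a < n \<Longrightarrow> j < n \<Longrightarrow> (j + 1) mod n = a \<longleftrightarrow> j = pv n a"
  unfolding pv_def by (cases "j + 1 = n") auto

lemma cd_eq: "a < n \<Longrightarrow> p < n \<Longrightarrow> cd n a p = min (fd n a p) (n - fd n a p)" by (simp add: cd_def)

lemma ar1: "(d::nat) < 2*h \<Longrightarrow> 0 < d \<Longrightarrow> min (d - 1) (2*h - (d - 1)) = min d (2*h - d) + 1 \<or> min (d - 1) (2*h - (d - 1)) + 1 = min d (2*h - d)"
  by (cases "d \<le> h") (auto simp: min_def)
lemma ar2: "(d::nat) < 2*h \<Longrightarrow> d + 1 \<noteq> 2*h \<Longrightarrow> min (d + 1) (2*h - (d + 1)) = min d (2*h - d) + 1 \<or> min (d + 1) (2*h - (d + 1)) + 1 = min d (2*h - d)"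
  by (cases "d < h") (auto simp: min_def)

lemma cd_nx_gen:
  assumes "n = 2*h" "a < n" "p < n"
  shows "cd n (nx n a) p = min (if fd n a p = 0 then n - 1 else fd n a p - 1) (n - (if fd n a p = 0 then n - 1 else fd n a p - 1))"
  using fd_nx[of a n p] assms nx_lt[of a n] unfolding cd_def by simp
lemma cd_pv_gen:
  assumes "n = 2*h" "a < n" "p < n"
  shows "cd n (pv n a) p = min (if fd n a p = n - 1 then 0 else fd n a p + 1) (n - (if fd n a p = n - 1 then 0 else fd n a p + 1))"
  using fd_pv[of a n p] assms pv_lt[of a n] unfolding cd_def by simp

lemma cd_nx: assumes "n = 2*h" "2 \<le> h" "a < n" "p < n"
  shows "cd n (nx n a) p = cd n a p + 1 \<or> cd n (nx n a) p + 1 = cd n a p"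
proof -
  define d where "d = fd n a p"
  have "d < n" using fd_lt assms d_def by auto
  have e: "cd n (nx n a) p = min (if d = 0 then n - 1 else d - 1) (n - (if d = 0 then n - 1 else d - 1))"
    using cd_nx_gen[OF assms(1,3,4)] d_def by simp
  have e2: "cd n a p = min d (n - d)" unfolding cd_def d_def by simp
  show ?thesis
  proof (cases "d = 0")
    case True
    then show ?thesis using assms e e2 by simp
  next
    case False
    then show ?thesis using assms ar1[of d h] \<open>d < n\<close> e e2 by simp
  qed
qed

lemma cd_pv: assumes "n = 2*h" "2 \<le> h" "a < n" "p < n"
  shows "cd n (pv n a) p = cd n a p + 1 \<or> cd n (pv n a) p + 1 = cd n a p"
proof -
  define d where "d = fd n a p"
  have "d < n" using fd_lt assms d_def by auto
  have e: "cd n (pv n a) p = min (if d = n - 1 then 0 else d + 1) (n - (if d = n - 1 then 0 else d + 1))"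
    using cd_pv_gen[OF assms(1,3,4)] d_def by simp
  have e2: "cd n a p = min d (n - d)" unfolding cd_def d_def by simp
  show ?thesis
  proof (cases "d = n - 1")
    case True
    then show ?thesis using assms e e2 by (simp add: min_def)
  next
    case False
    then show ?thesis using assms ar2[of d h] \<open>d < n\<close> e e2 by simp
  qed
qed

lemma cd_self: "cd n a a = 0" unfolding cd_def fd_def by simp
lemma cd_zero: "a < n \<Longrightarrow> p < n \<Longrightarrow> cd n a p = 0 \<Longrightarrow> a = p"
  unfolding cd_def fd_def by (auto simp: min_def split: if_splits)

lemma cd_same: assumes "n = 2*h" "2 \<le> h" "p < n"
  shows "cd n (nx n p) p = 1" "cd n (pv n p) p = 1"
proof -
  have "fd n p p = 0" using fd_zero[of p n p] assms by simp
  then show "cd n (nx n p) p = 1" "cd n (pv n p) p = 1"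
    using cd_nx_gen[OF assms(1,3,3)] cd_pv_gen[OF assms(1,3,3)] assms by (simp_all add: min_def)
qed

lemma cd_anti: assumes "n = 2*h" "2 \<le> h" "p < n" "q = anti h p"
  shows "cd n (nx n p) q + 1 = cd n p q" "cd n (pv n p) q + 1 = cd n p q"
proof -
  have q: "q < n" using anti_lt assms by auto
  have "fd n p q = h" using fd_anti_iff[OF assms(1,3) q] assms by simp
  then show "cd n (nx n p) q + 1 = cd n p q" "cd n (pv n p) q + 1 = cd n p q"
    using cd_nx_gen[OF assms(1,3) q] cd_pv_gen[OF assms(1,3) q] assms cd_eq[OF assms(3) q]
    by (auto simp: min_def)
qed

lemma cd_off: assumes "n = 2*h" "2 \<le> h" "p < n" "q < n" "q \<noteq> p" "q \<noteq> anti h p"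
  shows "(cd n (nx n p) q = cd n p q + 1 \<and> cd n (pv n p) q + 1 = cd n p q) \<or>
         (cd n (nx n p) q + 1 = cd n p q \<and> cd n (pv n p) q = cd n p q + 1)"
proof -
  define d where "d = fd n p q"
  have "d < n" using fd_lt assms d_def by auto
  have "d \<noteq> 0" using fd_zero[of p n q] assms d_def by auto
  have "d \<noteq> h" using fd_anti_iff[of n h p q] assms d_def by auto
  have e: "cd n (nx n p) q = min (d - 1) (n - (d - 1))"
    using cd_nx_gen[OF assms(1,3,4)] d_def \<open>d \<noteq> 0\<close> by simp
  have e1: "cd n (pv n p) q = min (if d = n - 1 then 0 else d + 1) (n - (if d = n - 1 then 0 else d + 1))"
    using cd_pv_gen[OF assms(1,3,4)] d_def by simp
  have e2: "cd n p q = min d (n - d)" unfolding cd_def d_def by simp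
  show ?thesis
  proof (cases "d < h")
    case True
    have "d - 1 \<le> n - (d - 1)" using True assms by arith
    then have "cd n (nx n p) q = d - 1" using e by simp
    moreover have "cd n (pv n p) q = d + 1"
    proof -
      have "d \<noteq> n - 1" "d + 1 \<le> n - (d + 1)" using True assms by arith+
      then show ?thesis using e1 by simp
    qed
    moreover have "d \<le> n - d" using True assms by arith
    then have "cd n p q = d" using e2 by simp
    ultimately show ?thesis using \<open>d \<noteq> 0\<close> by simp
  next
    case False
    have A: "n - (d - 1) \<le> d - 1" "n - d \<le> d" using False \<open>d \<noteq> h\<close> assms by arith+
    have B: "cd n (nx n p) q = n - d + 1" using e A \<open>d < n\<close> by simp
    have C: "cd n p q = n - d" using e2 A by simp
    show ?thesis
    proof (cases "d = n - 1")
      case True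
      then have "cd n (pv n p) q = 0" using e1 by simp
      then show ?thesis using B C True \<open>d < n\<close> by simp
    next
      case F2: False
      have "n - (d + 1) \<le> d + 1" using False assms by arith
      then have "cd n (pv n p) q = n - (d + 1)" using e1 F2 by simp
      then show ?thesis using B C F2 \<open>d < n\<close> by simp
    qed
  qed
qed

lemma cd_closer: assumes "n = 2*h" "2 \<le> h" "p < n" "q < n" "q \<noteq> p"
  shows "cd n (nx n p) q + 1 = cd n p q \<or> cd n (pv n p) q + 1 = cd n p q"
  using cd_off[OF assms] cd_anti[OF assms(1-3)] by (cases "q = anti h p") auto

lemma cd0: "a < n \<Longrightarrow> cd n a 0 = min a (n - a)"
  unfolding cd_def fd_def by (cases "a = 0") (auto simp: min_def)
lemma cd1: "a < n \<Longrightarrow> 0 < a \<Longrightarrow> cd n a 1 = min (a - 1) (n - (a - 1))"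
  unfolding cd_def fd_def by (cases "a = 1") (auto simp: min_def)
lemma cd_res: assumes "n = 2*h" "2 \<le> h" "a < n" "a' < n" "cd n a 0 = cd n a' 0" "cd n a 1 = cd n a' 1"
  shows "a = a'"
proof (rule ccontr)
  assume ne: "a \<noteq> a'"
  have m: "min a (n - a) = min a' (n - a')" using assms cd0 by metis
  have "a' = n - a" using m ne assms(3,4) by (auto simp: min_def split: if_splits)
  then have "a \<noteq> 0" "a \<noteq> h" "a' \<noteq> 0" using ne assms by auto
  have c1: "cd n a 1 = min (a - 1) (n - (a - 1))" using cd1 assms \<open>a \<noteq> 0\<close> by simp
  have c2: "cd n a' 1 = min (a' - 1) (n - (a' - 1))" using cd1 assms \<open>a' \<noteq> 0\<close> by simp
  show False
  proof (cases "a < h")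
    case True
    have "a - 1 \<le> n - (a - 1)" "a' - 1 \<ge> n - (a' - 1)" using True assms \<open>a' = n - a\<close> by arith+
    then have "cd n a 1 = a - 1" "cd n a' 1 = n - (a' - 1)" using c1 c2 by simp_all
    then show False using assms \<open>a \<noteq> 0\<close> \<open>a' = n - a\<close> True by simp
  next
    case False
    have "a - 1 \<ge> n - (a - 1)" "a' - 1 \<le> n - (a' - 1)" using False assms \<open>a' = n - a\<close> \<open>a \<noteq> h\<close> by arith+
    then have "cd n a 1 = n - (a - 1)" "cd n a' 1 = a' - 1" using c1 c2 by simp_all
    then show False using assms \<open>a \<noteq> h\<close> \<open>a' = n - a\<close> False by simp
  qed
qed




definition DD :: "nat \<Rightarrow> (nat \<times> nat) \<times> nat \<Rightarrow> (nat \<times> nat) \<times> nat \<Rightarrow> nat" where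
  "DD n x q = cd n (fst (fst x)) (fst (fst q)) + ad (snd (fst x)) (snd (fst q)) + ad (snd x) (snd q)"
lemma DD_simp[simp]: "DD n ((a,b),c) ((p,u),v) = cd n a p + ad b u + ad c v"
  by (simp add: DD_def)

definition VV :: "nat \<Rightarrow> nat \<Rightarrow> nat \<Rightarrow> ((nat \<times> nat) \<times> nat) set" where
  "VV n k m = ({0..<n} \<times> {0..<k}) \<times> {0..<m}"
lemma VV_iff[simp]: "((a,b),c) \<in> VV n k m \<longleftrightarrow> a < n \<and> b < k \<and> c < m" by (auto simp: VV_def)

definition collS :: "nat \<Rightarrow> nat \<Rightarrow> nat \<Rightarrow> ((nat \<times> nat) \<times> nat) set \<Rightarrow> bool" where
  "collS n k m S \<longleftrightarrow> (\<exists>x\<in>VV n k m. \<exists>y\<in>VV n k m. x \<noteq> y \<and> (\<forall>s\<in>S. DD n x s = DD n y s))"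

definition pm1 :: "nat \<Rightarrow> nat \<Rightarrow> bool" where "pm1 X Y \<longleftrightarrow> X = Y + 1 \<or> X + 1 = Y"

lemma pigeon:
  assumes "finite N" "N \<subseteq> VV n k m" "finite T" "card T < card N"
    "\<forall>y\<in>N. (DD n y s, DD n y t, DD n y w) \<in> T"
  shows "collS n k m {s,t,w}"
proof -
  define g where "g = (\<lambda>y. (DD n y s, DD n y t, DD n y w))"
  have "\<not> inj_on g N"
  proof
    assume "inj_on g N"
    then have "card (g ` N) = card N" by (rule card_image)
    moreover have "g ` N \<subseteq> T" using assms(5) g_def by auto
    then have "card (g ` N) \<le> card T" using card_mono[OF assms(3)] by blast
    ultimately show False using assms(4) by simp
  qed
  then obtain x y where "x \<in> N" "y \<in> N" "x \<noteq> y" "g x = g y" unfolding inj_on_def by blast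
  then show ?thesis unfolding collS_def g_def using assms(2) by blast
qed

lemma ad_pm1: "b' = b + 1 \<or> b = b' + 1 \<Longrightarrow> pm1 (ad b' u) (ad b u)"
  by (auto simp: ad_def pm1_def)
lemma ad_self[simp]: "ad b b = 0" by (simp add: ad_def)

definition isnb :: "nat \<Rightarrow> nat \<Rightarrow> nat \<Rightarrow> (nat \<times> nat) \<times> nat \<Rightarrow> (nat \<times> nat) \<times> nat \<Rightarrow> bool" where
  "isnb n k m s y \<longleftrightarrow> y \<in> VV n k m \<and> DD n y s = 1 \<and> (\<forall>w\<in>VV n k m. pm1 (DD n y w) (DD n s w))"

lemma pm1_add: "pm1 X Y \<Longrightarrow> pm1 (X + c) (Y + c)" "pm1 X Y \<Longrightarrow> pm1 (c + X) (c + Y)"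
  by (auto simp: pm1_def)

context
  fixes n h k m :: nat
  assumes nh: "n = 2*h" and h2: "2 \<le> h" and k3: "3 \<le> k" and m2: "2 \<le> m"
begin

lemma isnb_nx: "p < n \<Longrightarrow> u < k \<Longrightarrow> v < m \<Longrightarrow> isnb n k m ((p,u),v) ((nx n p,u),v)"
  unfolding isnb_def
proof (intro conjI ballI)
  fix w assume "p < n" "u < k" "v < m" "w \<in> VV n k m"
  obtain q u2 v2 where w: "w = ((q,u2),v2)" by (metis prod.collapse)
  have "q < n" using \<open>w \<in> VV n k m\<close> w by simp
  have "pm1 (cd n (nx n p) q) (cd n p q)" using cd_nx[OF nh h2 \<open>p < n\<close> \<open>q < n\<close>] by (auto simp: pm1_def)
  then show "pm1 (DD n ((nx n p, u), v) w) (DD n ((p, u), v) w)" using w by (simp add: pm1_def)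
qed (auto simp: nx_lt cd_same[OF nh h2])

lemma isnb_pv: "p < n \<Longrightarrow> u < k \<Longrightarrow> v < m \<Longrightarrow> isnb n k m ((p,u),v) ((pv n p,u),v)"
  unfolding isnb_def
proof (intro conjI ballI)
  fix w assume "p < n" "u < k" "v < m" "w \<in> VV n k m"
  obtain q u2 v2 where w: "w = ((q,u2),v2)" by (metis prod.collapse)
  have "q < n" using \<open>w \<in> VV n k m\<close> w by simp
  have "pm1 (cd n (pv n p) q) (cd n p q)" using cd_pv[OF nh h2 \<open>p < n\<close> \<open>q < n\<close>] by (auto simp: pm1_def)
  then show "pm1 (DD n ((pv n p, u), v) w) (DD n ((p, u), v) w)" using w by (simp add: pm1_def)
qed (auto simp: pv_lt cd_same[OF nh h2])

lemma isnb_b: "p < n \<Longrightarrow> u < k \<Longrightarrow> v < m \<Longrightarrow> u' < k \<Longrightarrow> u' = u + 1 \<or> u = u' + 1 \<Longrightarrow> isnb n k m ((p,u),v) ((p,u'),v)"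
  unfolding isnb_def
proof (intro conjI ballI)
  fix w assume a: "p < n" "u < k" "v < m" "u' < k" "u' = u + 1 \<or> u = u' + 1" "w \<in> VV n k m"
  obtain q u2 v2 where w: "w = ((q,u2),v2)" by (metis prod.collapse)
  have "pm1 (ad u' u2) (ad u u2)" using ad_pm1 a by blast
  then show "pm1 (DD n ((p, u'), v) w) (DD n ((p, u), v) w)" using w by (simp add: pm1_def)
qed (auto simp: cd_self ad_def)

lemma isnb_c: "p < n \<Longrightarrow> u < k \<Longrightarrow> v < m \<Longrightarrow> v' < m \<Longrightarrow> v' = v + 1 \<or> v = v' + 1 \<Longrightarrow> isnb n k m ((p,u),v) ((p,u),v')"
  unfolding isnb_def
proof (intro conjI ballI)
  fix w assume a: "p < n" "u < k" "v < m" "v' < m" "v' = v + 1 \<or> v = v' + 1" "w \<in> VV n k m"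
  obtain q u2 v2 where w: "w = ((q,u2),v2)" by (metis prod.collapse)
  have "pm1 (ad v' v2) (ad v v2)" using ad_pm1 a by blast
  then show "pm1 (DD n ((p, u), v') w) (DD n ((p, u), v) w)" using w by (simp add: pm1_def)
qed (auto simp: cd_self ad_def)

lemma pig5:
  assumes "finite N" "5 \<le> card N" "\<forall>y\<in>N. isnb n k m s y" "t \<in> VV n k m" "w \<in> VV n k m"
  shows "collS n k m {s,t,w}"
proof -
  define R where "R = DD n s t"
  define R' where "R' = DD n s w"
  define T where "T = set [(1::nat,R+1,R'+1), (1,R+1,R'-1), (1,R-1,R'+1), (1,R-1,R'-1)]"
  have "card T \<le> 4" unfolding T_def by (rule order.trans[OF card_length]) simp
  show ?thesis
  proof (rule pigeon[OF assms(1) _ _ _ ])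
    show "N \<subseteq> VV n k m" using assms(3) isnb_def by auto
    show "finite T" unfolding T_def by simp
    show "card T < card N" using \<open>card T \<le> 4\<close> assms(2) by simp
    show "\<forall>y\<in>N. (DD n y s, DD n y t, DD n y w) \<in> T"
    proof
      fix y assume "y \<in> N"
      then have "DD n y s = 1" "pm1 (DD n y t) R" "pm1 (DD n y w) R'"
        using assms(3-5) R_def R'_def isnb_def by auto
      then show "(DD n y s, DD n y t, DD n y w) \<in> T" unfolding T_def pm1_def by auto
    qed
  qed
qed

lemma pig3:
  assumes "finite N" "3 \<le> card N" "\<forall>y\<in>N. isnb n k m s y \<and> DD n y t = T0" "w \<in> VV n k m"
  shows "collS n k m {s,t,w}"
proof -
  define R' where "R' = DD n s w"
  define T where "T = set [(1::nat,T0,R'+1), (1,T0,R'-1)]"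
  have "card T \<le> 2" unfolding T_def by (rule order.trans[OF card_length]) simp
  show ?thesis
  proof (rule pigeon[OF assms(1) _ _ _ ])
    show "N \<subseteq> VV n k m" using assms(3) isnb_def by auto
    show "finite T" unfolding T_def by simp
    show "card T < card N" using \<open>card T \<le> 2\<close> assms(2) by simp
    show "\<forall>y\<in>N. (DD n y s, DD n y t, DD n y w) \<in> T"
    proof
      fix y assume "y \<in> N"
      then have "DD n y s = 1" "DD n y t = T0" "pm1 (DD n y w) R'"
        using assms(3-4) R'_def isnb_def by auto
      then show "(DD n y s, DD n y t, DD n y w) \<in> T" unfolding T_def pm1_def by auto
    qed
  qed
qed

lemma noncorner:
  assumes s: "s = ((p,u),v)" "s \<in> VV n k m" and t: "t \<in> VV n k m" and w: "w \<in> VV n k m"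
    and nc: "(0 < u \<and> u + 1 < k) \<or> (0 < v \<and> v + 1 < m)"
  shows "collS n k m {s,t,w}"
proof -
  have p: "p < n" "u < k" "v < m" using s by auto
  have d: "nx n p \<noteq> pv n p" "nx n p \<noteq> p" "pv n p \<noteq> p"
    using nx_pv_ne nx_ne pv_ne p nh h2 by auto
  show ?thesis
  proof (cases "0 < u \<and> u + 1 < k")
    case True
    define vv where "vv = (if v + 1 < m then v + 1 else v - 1)"
    have vv: "vv < m" "vv = v + 1 \<or> v = vv + 1" "vv \<noteq> v" using p m2 vv_def by auto
    define N where "N = {((nx n p,u),v), ((pv n p,u),v), ((p,u-1),v), ((p,u+1),v), ((p,u),vv)}"
    have "card N = 5" unfolding N_def using d True vv by auto
    moreover have "\<forall>y\<in>N. isnb n k m s y"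
      unfolding N_def s using isnb_nx isnb_pv isnb_b isnb_c p True vv by auto
    ultimately show ?thesis using pig5[of N s t w] t w N_def by simp
  next
    case False
    then have F: "0 < v" "v + 1 < m" using nc by auto
    define uu where "uu = (if u + 1 < k then u + 1 else u - 1)"
    have uu: "uu < k" "uu = u + 1 \<or> u = uu + 1" "uu \<noteq> u" using p k3 uu_def by auto
    define N where "N = {((nx n p,u),v), ((pv n p,u),v), ((p,u),v-1), ((p,u),v+1), ((p,uu),v)}"
    have "card N = 5" unfolding N_def using d F uu by auto
    moreover have "\<forall>y\<in>N. isnb n k m s y"
      unfolding N_def s using isnb_nx isnb_pv isnb_b isnb_c p F uu by auto
    ultimately show ?thesis using pig5[of N s t w] t w N_def by simp
  qed
qed

end



definition Cst :: "nat \<Rightarrow> nat \<Rightarrow> nat \<Rightarrow> nat \<Rightarrow> nat \<Rightarrow> nat \<Rightarrow> nat \<Rightarrow> bool" where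
  "Cst h p u v q u2 v2 \<longleftrightarrow> (u2 = u \<and> v2 = v \<longrightarrow> q = anti h p) \<and> (u2 \<noteq> u \<and> v2 \<noteq> v \<longrightarrow> q = p)
     \<and> ((u2 = u) \<noteq> (v2 = v) \<longrightarrow> q \<noteq> p \<and> q \<noteq> anti h p)"

context
  fixes n h k m :: nat
  assumes nh: "n = 2*h" and h2: "2 \<le> h" and k3: "3 \<le> k" and m2: "2 \<le> m"
begin

lemma tri:
  assumes "isnb n k m s z1" "isnb n k m s z2" "isnb n k m s z3" "z1 \<noteq> z2" "z1 \<noteq> z3" "z2 \<noteq> z3"
    "DD n z1 t = T0" "DD n z2 t = T0" "DD n z3 t = T0" "w \<in> VV n k m"
  shows "collS n k m {s,t,w}"
  using pig3[OF nh h2 k3 m2, of "{z1,z2,z3}" s t T0 w] assms by auto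

lemma corner_pig:
  assumes s: "p < n" "u < k" "v < m" and t: "q < n" "u2 < k" "v2 < m" and w: "w \<in> VV n k m"
    and cs: "u = 0 \<or> u = k - 1" "v = 0 \<or> v = m - 1"
    and ct: "u2 = 0 \<or> u2 = k - 1" "v2 = 0 \<or> v2 = m - 1"
    and nc: "\<not> collS n k m {((p,u),v), ((q,u2),v2), w}"
  shows "Cst h p u v q u2 v2"
proof -
  define ui where "ui = (if u = 0 then 1 else k - 2)"
  define vi where "vi = (if v = 0 then 1 else m - 2)"
  let ?s = "((p,u),v)" and ?t = "((q,u2),v2)"
  let ?Nb = "((p,ui),v)" and ?Nc = "((p,u),vi)" and ?N1 = "((nx n p,u),v)" and ?N2 = "((pv n p,u),v)"
  have ui: "ui < k" "ui = u + 1 \<or> u = ui + 1" "ui \<noteq> u" using cs k3 ui_def by auto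
  have vi: "vi < m" "vi = v + 1 \<or> v = vi + 1" "vi \<noteq> v" using cs m2 vi_def by auto
  have nb: "isnb n k m ?s ?Nb" "isnb n k m ?s ?Nc" "isnb n k m ?s ?N1" "isnb n k m ?s ?N2"
    using isnb_b[OF nh h2 k3 m2] isnb_c[OF nh h2 k3 m2] isnb_nx[OF nh h2 k3 m2] isnb_pv[OF nh h2 k3 m2] s ui vi by auto
  have d: "nx n p \<noteq> pv n p" "nx n p \<noteq> p" "pv n p \<noteq> p"
    using nx_pv_ne nx_ne pv_ne s nh h2 by auto
  have adu: "u2 = u \<Longrightarrow> ad ui u2 = ad u u2 + 1" "u2 \<noteq> u \<Longrightarrow> ad ui u2 + 1 = ad u u2"
    using cs ct ui_def k3 by (auto simp: ad_def)
  have adv: "v2 = v \<Longrightarrow> ad vi v2 = ad v v2 + 1" "v2 \<noteq> v \<Longrightarrow> ad vi v2 + 1 = ad v v2"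
    using cs ct vi_def m2 by (auto simp: ad_def)
  define R where "R = DD n ?s ?t"
  have R: "R = cd n p q + ad u u2 + ad v v2" unfolding R_def by simp
  have Nb: "u2 = u \<Longrightarrow> DD n ?Nb ?t = R + 1" "u2 \<noteq> u \<Longrightarrow> DD n ?Nb ?t + 1 = R"
    using adu R by auto
  have Nc: "v2 = v \<Longrightarrow> DD n ?Nc ?t = R + 1" "v2 \<noteq> v \<Longrightarrow> DD n ?Nc ?t + 1 = R"
    using adv R by auto
  have N1: "cd n (nx n p) q = cd n p q + 1 \<Longrightarrow> DD n ?N1 ?t = R + 1"
       "cd n (nx n p) q + 1 = cd n p q \<Longrightarrow> DD n ?N1 ?t + 1 = R" using R by auto
  have N2: "cd n (pv n p) q = cd n p q + 1 \<Longrightarrow> DD n ?N2 ?t = R + 1"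
       "cd n (pv n p) q + 1 = cd n p q \<Longrightarrow> DD n ?N2 ?t + 1 = R" using R by auto
  have neq: "?Nb \<noteq> ?Nc" "?N1 \<noteq> ?Nb" "?N1 \<noteq> ?Nc" "?N2 \<noteq> ?Nb" "?N2 \<noteq> ?Nc" "?N1 \<noteq> ?N2"
    using ui vi d by auto
  have T3: "collS n k m {?s, ?t, w}" if "isnb n k m ?s z1" "isnb n k m ?s z2" "isnb n k m ?s z3"
     "z1 \<noteq> z2" "z1 \<noteq> z3" "z2 \<noteq> z3" "DD n z1 ?t = T0" "DD n z2 ?t = T0" "DD n z3 ?t = T0" for z1 z2 z3 T0
    by (rule tri[OF that w])
  have P1: "q = anti h p" if "u2 = u" "v2 = v"
  proof (rule ccontr)
    assume qa: "q \<noteq> anti h p"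
    have b: "DD n ?Nb ?t = R + 1" "DD n ?Nc ?t = R + 1" using Nb(1)[OF that(1)] Nc(1)[OF that(2)] .
    show False
    proof (cases "q = p")
      case True
      have "DD n ?N1 ?t = R + 1" using N1(1) cd_same(1)[OF nh h2 s(1)] cd_self[of n p] True by simp
      then show False using T3[OF nb(3) nb(1) nb(2) neq(2) neq(3) neq(1) _ b] nc by blast
    next
      case False
      then consider "cd n (nx n p) q = cd n p q + 1" | "cd n (pv n p) q = cd n p q + 1"
        using cd_off[OF nh h2 s(1) t(1) False qa] by blast
      then show False
      proof cases
        case 1
        then show False using N1(1) T3[OF nb(3) nb(1) nb(2) neq(2) neq(3) neq(1) _ b] nc by blast
      next
        case 2
        then show False using N2(1) T3[OF nb(4) nb(1) nb(2) neq(4) neq(5) neq(1) _ b] nc by blast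
      qed
    qed
  qed
  have P2: "q = p" if "u2 \<noteq> u" "v2 \<noteq> v"
  proof (rule ccontr)
    assume qa: "q \<noteq> p"
    have b: "DD n ?Nb ?t = R - 1" "DD n ?Nc ?t = R - 1" using Nb(2)[OF that(1)] Nc(2)[OF that(2)] by auto
    consider "cd n (nx n p) q + 1 = cd n p q" | "cd n (pv n p) q + 1 = cd n p q"
      using cd_closer[OF nh h2 s(1) t(1) qa] by blast
    then show False
    proof cases
      case 1
      then have "DD n ?N1 ?t = R - 1" using N1(2) by force
      then show False using T3[OF nb(3) nb(1) nb(2) neq(2) neq(3) neq(1) _ b] nc by blast
    next
      case 2
      then have "DD n ?N2 ?t = R - 1" using N2(2) by force
      then show False using T3[OF nb(4) nb(1) nb(2) neq(4) neq(5) neq(1) _ b] nc by blast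
    qed
  qed
  have P3: "q \<noteq> p \<and> q \<noteq> anti h p" if "(u2 = u) \<noteq> (v2 = v)"
  proof (rule ccontr)
    assume "\<not> (q \<noteq> p \<and> q \<noteq> anti h p)"
    then consider "q = p" | "q = anti h p" by blast
    then show False
    proof cases
      case 1
      have c: "DD n ?N1 ?t = R + 1" "DD n ?N2 ?t = R + 1"
        using N1(1) N2(1) cd_same[OF nh h2 s(1)] cd_self[of n p] 1 by auto
      show False
      proof (cases "u2 = u")
        case True
        then show False using T3[OF nb(3) nb(4) nb(1) neq(6) neq(2) neq(4) c Nb(1)] nc by blast
      next
        case False
        then have "v2 = v" using that by auto
        then show False using T3[OF nb(3) nb(4) nb(2) neq(6) neq(3) neq(5) c Nc(1)] nc by blast
      qed
    next
      case 2
      have c: "DD n ?N1 ?t = R - 1" "DD n ?N2 ?t = R - 1"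
        using N1(2) N2(2) cd_anti[OF nh h2 s(1) 2] by force+
      show False
      proof (cases "u2 = u")
        case False
        have "DD n ?Nb ?t = R - 1" using Nb(2)[OF False] by auto
        then show False using T3[OF nb(3) nb(4) nb(1) neq(6) neq(2) neq(4) c] nc by blast
      next
        case True
        then have "v2 \<noteq> v" using that by auto
        have "DD n ?Nc ?t = R - 1" using Nc(2)[OF \<open>v2 \<noteq> v\<close>] by auto
        then show False using T3[OF nb(3) nb(4) nb(2) neq(6) neq(3) neq(5) c] nc by blast
      qed
    qed
  qed
  show ?thesis unfolding Cst_def using P1 P2 P3 by blast
qed

end



context
  fixes n h k m :: nat
  assumes nh: "n = 2*h" and h2: "2 \<le> h" and k3: "3 \<le> k" and m2: "2 \<le> m"
begin

lemma refl_core: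
  assumes A: "A < n" "A' < n" "A \<noteq> A'"
    and cu: "u = 0 \<or> u = k - 1" and cv: "v = 0 \<or> v = m - 1"
    and e1: "cd n A p1 = cd n A' p1" and e2: "cd n A p2 = cd n A' p2"
    and c2: "(u2 = u \<and> v2 = v) \<or> (u2 = k - 1 - u \<and> v2 = m - 1 - v)"
    and c3: "(u3 = u \<and> v3 = m - 1 - v \<and> cd n A p3 = cd n A' p3 + 2) \<or>
             (u3 = k - 1 - u \<and> v3 = v \<and> cd n A p3 + 2 = cd n A' p3)"
  shows "collS n k m {((p1,u),v), ((p2,u2),v2), ((p3,u3),v3)}"
proof -
  define ui where "ui = (if u = 0 then 1 else k - 2)"
  define vi where "vi = (if v = 0 then 1 else m - 2)"
  have r: "ui < k" "vi < m" "u < k" "v < m" using cu cv k3 m2 ui_def vi_def by auto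
  have a1: "ad u u = 0" "ad ui u = 1" "ad u (k - 1 - u) = k - 1" "ad ui (k - 1 - u) = k - 2"
    using cu ui_def k3 by (auto simp: ad_def)
  have a2: "ad v v = 0" "ad vi v = 1" "ad v (m - 1 - v) = m - 1" "ad vi (m - 1 - v) = m - 2"
    using cv vi_def m2 by (auto simp: ad_def)
  let ?X = "((A,u),vi)" and ?Y = "((A',ui),v)"
  have "DD n ?X ((p1,u),v) = DD n ?Y ((p1,u),v)" using e1 a1 a2 by simp
  moreover have "DD n ?X ((p2,u2),v2) = DD n ?Y ((p2,u2),v2)"
  proof (cases "u2 = u \<and> v2 = v")
    case True
    then show ?thesis using e2 a1 a2 by simp
  next
    case False
    then have "u2 = k - 1 - u" "v2 = m - 1 - v" using c2 by auto
    then have "DD n ?X ((p2,u2),v2) = cd n A p2 + (k - 1) + (m - 2)"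
      "DD n ?Y ((p2,u2),v2) = cd n A' p2 + (k - 2) + (m - 1)" using a1 a2 by simp_all
    then show ?thesis using e2 k3 m2 by simp
  qed
  moreover have "DD n ?X ((p3,u3),v3) = DD n ?Y ((p3,u3),v3)"
  proof (cases "u3 = u \<and> v3 = m - 1 - v \<and> cd n A p3 = cd n A' p3 + 2")
    case True
    then have "DD n ?X ((p3,u3),v3) = cd n A p3 + (m - 2)"
      "DD n ?Y ((p3,u3),v3) = cd n A' p3 + 1 + (m - 1)" using a1 a2 by simp_all
    then show ?thesis using True m2 by simp
  next
    case False
    then have F: "u3 = k - 1 - u" "v3 = v" "cd n A p3 + 2 = cd n A' p3" using c3 by auto
    then have "DD n ?X ((p3,u3),v3) = cd n A p3 + (k - 1) + 1"
      "DD n ?Y ((p3,u3),v3) = cd n A' p3 + (k - 2)" using a1 a2 by simp_all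
    then show ?thesis using F k3 by simp
  qed
  moreover have "?X \<in> VV n k m" "?Y \<in> VV n k m" "?X \<noteq> ?Y" using A r by auto
  ultimately show ?thesis unfolding collS_def
    by (intro bexI[of _ ?X] bexI[of _ ?Y] conjI) auto
qed

lemma refl_lem:
  assumes p: "p < n" and cu: "u = 0 \<or> u = k - 1" and cv: "v = 0 \<or> v = m - 1"
    and p2: "p2 = p \<or> p2 = anti h p" and p3: "p3 < n" "p3 \<noteq> p" "p3 \<noteq> anti h p"
    and c2: "(u2 = u \<and> v2 = v) \<or> (u2 = k - 1 - u \<and> v2 = m - 1 - v)"
    and c3: "(u3 = u \<and> v3 = m - 1 - v) \<or> (u3 = k - 1 - u \<and> v3 = v)"
  shows "collS n k m {((p,u),v), ((p2,u2),v2), ((p3,u3),v3)}"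
proof -
  have A: "nx n p < n" "pv n p < n" "nx n p \<noteq> pv n p" using nx_lt pv_lt nx_pv_ne p nh h2 by auto
  have e1: "cd n (nx n p) p = cd n (pv n p) p" using cd_same[OF nh h2 p] by simp
  have e2: "cd n (nx n p) p2 = cd n (pv n p) p2"
    using p2 cd_same[OF nh h2 p] cd_anti[OF nh h2 p] by auto
  consider "cd n (nx n p) p3 = cd n (pv n p) p3 + 2" | "cd n (nx n p) p3 + 2 = cd n (pv n p) p3"
    using cd_off[OF nh h2 p p3] by auto
  then show ?thesis
  proof cases
    case 1
    show ?thesis
    proof (cases "u3 = u \<and> v3 = m - 1 - v")
      case True
      then show ?thesis using refl_core[OF A(1,2,3) cu cv e1 e2 c2] 1 by blast
    next
      case False
      then have "u3 = k - 1 - u \<and> v3 = v" using c3 by blast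
      then show ?thesis using refl_core[OF A(2,1) A(3)[symmetric] cu cv e1[symmetric] e2[symmetric] c2] 1 by auto
    qed
  next
    case 2
    show ?thesis
    proof (cases "u3 = u \<and> v3 = m - 1 - v")
      case True
      then show ?thesis using refl_core[OF A(2,1) A(3)[symmetric] cu cv e1[symmetric] e2[symmetric] c2] 2 by auto
    next
      case False
      then have "u3 = k - 1 - u \<and> v3 = v" using c3 by blast
      then show ?thesis using refl_core[OF A(1,2,3) cu cv e1 e2 c2] 2 by blast
    qed
  qed
qed

definition corner :: "nat \<Rightarrow> nat \<Rightarrow> nat \<Rightarrow> nat \<Rightarrow> bool" where
  "corner kk mm u v \<longleftrightarrow> (u = 0 \<or> u = kk - 1) \<and> (v = 0 \<or> v = mm - 1)"

lemma other_u: "corner k m u v \<Longrightarrow> corner k m u' v' \<Longrightarrow> u' \<noteq> u \<Longrightarrow> u' = k - 1 - u"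
  unfolding corner_def using k3 by auto
lemma other_v: "corner k m u v \<Longrightarrow> corner k m u' v' \<Longrightarrow> v' \<noteq> v \<Longrightarrow> v' = m - 1 - v"
  unfolding corner_def using m2 by auto

lemma two_vals: "corner k m u1 v1 \<Longrightarrow> corner k m u2 v2 \<Longrightarrow> corner k m u3 v3 \<Longrightarrow>
  (u2 \<noteq> u1 \<longrightarrow> u3 \<noteq> u1 \<longrightarrow> u3 = u2) \<and> (v2 \<noteq> v1 \<longrightarrow> v3 \<noteq> v1 \<longrightarrow> v3 = v2)"
  unfolding corner_def by auto

lemma caseSame:
  assumes p: "p1 < n" "p2 < n" "p3 < n"
    and c: "corner k m u1 v1" "corner k m u2 v2" "corner k m u3 v3"
    and same: "u2 = u1" "v2 = v1"
    and C12: "Cst h p1 u1 v1 p2 u2 v2" and C13: "Cst h p1 u1 v1 p3 u3 v3" and C23: "Cst h p2 u2 v2 p3 u3 v3"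
  shows "collS n k m {((p1,u1),v1), ((p2,u2),v2), ((p3,u3),v3)}"
proof -
  have q2: "p2 = anti h p1" using C12 same unfolding Cst_def by auto
  have an: "anti h p1 \<noteq> p1" "anti h (anti h p1) = p1" using anti_ne anti_anti nh h2 p by auto
  consider "u3 = u1 \<and> v3 = v1" | "u3 \<noteq> u1 \<and> v3 \<noteq> v1" | "(u3 = u1) \<noteq> (v3 = v1)" by blast
  then show ?thesis
  proof cases
    case 1
    then have "p3 = anti h p1" "p3 = anti h p2" using C13 C23 same unfolding Cst_def by auto
    then show ?thesis using q2 an by simp
  next
    case 2
    then have "p3 = p1" "p3 = p2" using C13 C23 same unfolding Cst_def by auto
    then show ?thesis using q2 an by simp
  next
    case 3
    then have off: "p3 \<noteq> p1" "p3 \<noteq> anti h p1" using C13 unfolding Cst_def by auto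
    have cu: "u1 = 0 \<or> u1 = k - 1" and cv: "v1 = 0 \<or> v1 = m - 1" using c(1) unfolding corner_def by auto
    have c3: "(u3 = u1 \<and> v3 = m - 1 - v1) \<or> (u3 = k - 1 - u1 \<and> v3 = v1)"
      using 3 other_u[OF c(1) c(3)] other_v[OF c(1) c(3)] by auto
    show ?thesis using refl_lem[OF p(1) cu cv _ p(3) off, of p2 u2 v2 u3 v3] q2 same c3 by auto
  qed
qed

lemma caseDiag:
  assumes p: "p1 < n" "p2 < n" "p3 < n"
    and c: "corner k m u1 v1" "corner k m u2 v2" "corner k m u3 v3"
    and diag: "u2 \<noteq> u1" "v2 \<noteq> v1" and adj: "(u3 = u1) \<noteq> (v3 = v1)"
    and C12: "Cst h p1 u1 v1 p2 u2 v2" and C13: "Cst h p1 u1 v1 p3 u3 v3"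
  shows "collS n k m {((p1,u1),v1), ((p2,u2),v2), ((p3,u3),v3)}"
proof -
  have q2: "p2 = p1" using C12 diag unfolding Cst_def by auto
  have off: "p3 \<noteq> p1" "p3 \<noteq> anti h p1" using C13 adj unfolding Cst_def by auto
  have cu: "u1 = 0 \<or> u1 = k - 1" and cv: "v1 = 0 \<or> v1 = m - 1" using c(1) unfolding corner_def by auto
  have c2: "u2 = k - 1 - u1 \<and> v2 = m - 1 - v1" using diag other_u[OF c(1) c(2)] other_v[OF c(1) c(2)] by auto
  have c3: "(u3 = u1 \<and> v3 = m - 1 - v1) \<or> (u3 = k - 1 - u1 \<and> v3 = v1)"
    using adj other_u[OF c(1) c(3)] other_v[OF c(1) c(3)] by auto
  show ?thesis using refl_lem[OF p(1) cu cv _ p(3) off, of p2 u2 v2 u3 v3] q2 c2 c3 by auto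
qed

lemma corner_main:
  assumes s: "p1 < n" "u1 < k" "v1 < m" "p2 < n" "u2 < k" "v2 < m" "p3 < n" "u3 < k" "v3 < m"
    and c: "corner k m u1 v1" "corner k m u2 v2" "corner k m u3 v3"
  shows "collS n k m {((p1,u1),v1), ((p2,u2),v2), ((p3,u3),v3)}"
proof (rule ccontr)
  let ?s1 = "((p1,u1),v1)" and ?s2 = "((p2,u2),v2)" and ?s3 = "((p3,u3),v3)"
  assume nc: "\<not> collS n k m {?s1, ?s2, ?s3}"
  have perm: "{?s1,?s2,?s3} = {?s1,?s3,?s2}" "{?s1,?s2,?s3} = {?s2,?s1,?s3}" "{?s1,?s2,?s3} = {?s2,?s3,?s1}"
    "{?s1,?s2,?s3} = {?s3,?s1,?s2}" "{?s1,?s2,?s3} = {?s3,?s2,?s1}" by auto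
  have cc: "u1 = 0 \<or> u1 = k - 1" "v1 = 0 \<or> v1 = m - 1" "u2 = 0 \<or> u2 = k - 1" "v2 = 0 \<or> v2 = m - 1"
     "u3 = 0 \<or> u3 = k - 1" "v3 = 0 \<or> v3 = m - 1" using c unfolding corner_def by auto
  have nc132: "\<not> collS n k m {?s1, ?s3, ?s2}" using nc perm(1) by simp
  have nc213: "\<not> collS n k m {?s2, ?s1, ?s3}" using nc perm(2) by simp
  have nc231: "\<not> collS n k m {?s2, ?s3, ?s1}" using nc perm(3) by simp
  have nc312: "\<not> collS n k m {?s3, ?s1, ?s2}" using nc perm(4) by simp
  have nc321: "\<not> collS n k m {?s3, ?s2, ?s1}" using nc perm(5) by simp
  note cp = corner_pig[OF nh h2 k3 m2]
  have C12: "Cst h p1 u1 v1 p2 u2 v2" using cp[of p1 u1 v1 p2 u2 v2 ?s3] s cc nc by simp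
  have C13: "Cst h p1 u1 v1 p3 u3 v3" using cp[of p1 u1 v1 p3 u3 v3 ?s2] s cc nc132 by simp
  have C21: "Cst h p2 u2 v2 p1 u1 v1" using cp[of p2 u2 v2 p1 u1 v1 ?s3] s cc nc213 by simp
  have C23: "Cst h p2 u2 v2 p3 u3 v3" using cp[of p2 u2 v2 p3 u3 v3 ?s1] s cc nc231 by simp
  have C31: "Cst h p3 u3 v3 p1 u1 v1" using cp[of p3 u3 v3 p1 u1 v1 ?s2] s cc nc312 by simp
  have C32: "Cst h p3 u3 v3 p2 u2 v2" using cp[of p3 u3 v3 p2 u2 v2 ?s1] s cc nc321 by simp
  note cS = caseSame[of p1 p2 p3] caseSame[of p1 p3 p2] caseSame[of p2 p3 p1]
  note cD = caseDiag[of p1 p2 p3] caseDiag[of p1 p3 p2] caseDiag[of p2 p3 p1]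
  show False
  proof (cases "u2 = u1 \<and> v2 = v1")
    case True
    then show False using caseSame[of p1 p2 p3, OF _ _ _ c True[THEN conjunct1] True[THEN conjunct2] C12 C13 C23] s nc by simp
  next
    case F12: False
    show False
    proof (cases "u3 = u1 \<and> v3 = v1")
      case True
      then show False using caseSame[of p1 p3 p2, OF _ _ _ c(1,3,2) True[THEN conjunct1] True[THEN conjunct2] C13 C12 C32] s nc132 by simp
    next
      case F13: False
      show False
      proof (cases "u3 = u2 \<and> v3 = v2")
        case True
        then show False using caseSame[of p2 p3 p1, OF _ _ _ c(2,3,1) True[THEN conjunct1] True[THEN conjunct2] C23 C21 C31] s nc231 by simp
      next
        case F23: False
        have t1: "u2 \<noteq> u1 \<Longrightarrow> u3 \<noteq> u1 \<Longrightarrow> u3 = u2" "v2 \<noteq> v1 \<Longrightarrow> v3 \<noteq> v1 \<Longrightarrow> v3 = v2"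
          using two_vals[OF c(1,2,3)] by blast+
        have t2: "u1 \<noteq> u2 \<Longrightarrow> u3 \<noteq> u2 \<Longrightarrow> u3 = u1" "v1 \<noteq> v2 \<Longrightarrow> v3 \<noteq> v2 \<Longrightarrow> v3 = v1"
          using two_vals[OF c(2,1,3)] by blast+
        have t3: "u1 \<noteq> u3 \<Longrightarrow> u2 \<noteq> u3 \<Longrightarrow> u2 = u1" "v1 \<noteq> v3 \<Longrightarrow> v2 \<noteq> v3 \<Longrightarrow> v2 = v1"
          using two_vals[OF c(3,1,2)] by blast+
        show False
        proof (cases "u2 \<noteq> u1 \<and> v2 \<noteq> v1")
          case True
          have "(u3 = u1) \<noteq> (v3 = v1)" using True F13 F23 t1 by blast
          then show False using caseDiag[of p1 p2 p3, OF _ _ _ c _ _ _ C12 C13] True s nc by simp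
        next
          case N12: False
          show False
          proof (cases "u3 \<noteq> u1 \<and> v3 \<noteq> v1")
            case True
            have "(u2 = u1) \<noteq> (v2 = v1)" using N12 F12 by auto
            then show False using caseDiag[of p1 p3 p2, OF _ _ _ c(1,3,2) _ _ _ C13 C12] True s nc132 by simp
          next
            case N13: False
            show False
            proof (cases "u3 \<noteq> u2 \<and> v3 \<noteq> v2")
              case True
              have "(u1 = u2) \<noteq> (v1 = v2)" using N12 F12 by auto
              then show False using caseDiag[of p2 p3 p1, OF _ _ _ c(2,3,1) _ _ _ C23 C21] True s nc231 by simp
            next
              case N23: False
              show False using N12 N13 N23 F12 F13 F23 t1 t2 t3 by blast
            qed
          qed
        qed
      qed
    qed
  qed
qed

lemma comb:
  assumes "s1 \<in> VV n k m" "s2 \<in> VV n k m" "s3 \<in> VV n k m"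
  shows "collS n k m {s1, s2, s3}"
proof -
  obtain p1 u1 v1 where e1: "s1 = ((p1,u1),v1)" by (metis prod.collapse)
  obtain p2 u2 v2 where e2: "s2 = ((p2,u2),v2)" by (metis prod.collapse)
  obtain p3 u3 v3 where e3: "s3 = ((p3,u3),v3)" by (metis prod.collapse)
  have b: "p1 < n" "u1 < k" "v1 < m" "p2 < n" "u2 < k" "v2 < m" "p3 < n" "u3 < k" "v3 < m"
    using assms e1 e2 e3 by auto
  have nc: "corner k m u v \<or> (0 < u \<and> u + 1 < k) \<or> (0 < v \<and> v + 1 < m)" if "u < k" "v < m" for u v
    using that unfolding corner_def by auto
  note NC = noncorner[OF nh h2 k3 m2]
  show ?thesis
  proof (cases "corner k m u1 v1")
    case c1: True
    show ?thesis
    proof (cases "corner k m u2 v2")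
      case c2: True
      show ?thesis
      proof (cases "corner k m u3 v3")
        case c3: True
        show ?thesis using corner_main[OF b c1 c2 c3] e1 e2 e3 by simp
      next
        case False
        then have "(0 < u3 \<and> u3 + 1 < k) \<or> (0 < v3 \<and> v3 + 1 < m)" using nc b by blast
        then have "collS n k m {s3, s1, s2}" using NC[OF e3 assms(3) assms(1) assms(2)] by blast
        moreover have "{s3, s1, s2} = {s1, s2, s3}" by auto
        ultimately show ?thesis by simp
      qed
    next
      case False
      then have "(0 < u2 \<and> u2 + 1 < k) \<or> (0 < v2 \<and> v2 + 1 < m)" using nc b by blast
      then have "collS n k m {s2, s1, s3}" using NC[OF e2 assms(2) assms(1) assms(3)] by blast
      moreover have "{s2, s1, s3} = {s1, s2, s3}" by auto
      ultimately show ?thesis by simp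
    qed
  next
    case False
    then have "(0 < u1 \<and> u1 + 1 < k) \<or> (0 < v1 \<and> v1 + 1 < m)" using nc b by blast
    then show ?thesis using NC[OF e1 assms(1) assms(2) assms(3)] by blast
  qed
qed

end



lemma walk_Cons: "ys \<noteq> [] \<Longrightarrow> walk G (x # ys) \<longleftrightarrow> x \<in> verts G \<and> adj G x (hd ys) \<and> walk G ys"
proof
  assume ne: "ys \<noteq> []" and w: "walk G (x # ys)"
  have "adj G ((x # ys) ! 0) ((x # ys) ! Suc 0)" using w ne unfolding walk_def by (cases ys) auto
  then have "adj G x (hd ys)" using ne by (cases ys) auto
  moreover have "walk G ys" unfolding walk_def
  proof (intro conjI allI impI)
    show "ys \<noteq> []" by fact
    show "set ys \<subseteq> verts G" using w unfolding walk_def by auto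
    fix i assume "Suc i < length ys"
    then have "Suc (Suc i) < length (x # ys)" by simp
    then have "adj G ((x # ys) ! Suc i) ((x # ys) ! Suc (Suc i))" using w unfolding walk_def by blast
    then show "adj G (ys ! i) (ys ! Suc i)" by simp
  qed
  moreover have "x \<in> verts G" using w unfolding walk_def by auto
  ultimately show "x \<in> verts G \<and> adj G x (hd ys) \<and> walk G ys" by blast
next
  assume ne: "ys \<noteq> []" and h: "x \<in> verts G \<and> adj G x (hd ys) \<and> walk G ys"
  show "walk G (x # ys)" unfolding walk_def
  proof (intro conjI allI impI)
    show "x # ys \<noteq> []" by simp
    show "set (x # ys) \<subseteq> verts G" using h unfolding walk_def by auto
    fix i assume i: "Suc i < length (x # ys)"
    show "adj G ((x # ys) ! i) ((x # ys) ! Suc i)"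
    proof (cases i)
      case 0
      then show ?thesis using h ne by (cases ys) auto
    next
      case (Suc j)
      then have "Suc j < length ys" using i by simp
      then show ?thesis using h Suc unfolding walk_def by simp
    qed
  qed
qed

lemma walk_bound:
  assumes "walk G xs" and H1: "\<forall>x\<in>verts G. \<forall>y\<in>verts G. adj G x y \<longrightarrow> f x \<le> f y + (1::nat)"
  shows "f (hd xs) \<le> length xs - 1 + f (last xs)"
  using assms(1)
proof (induction xs)
  case Nil
  then show ?case by (simp add: walk_def)
next
  case (Cons x ys)
  show ?case
  proof (cases "ys = []")
    case True
    then show ?thesis by simp
  next
    case False
    then have w: "x \<in> verts G" "adj G x (hd ys)" "walk G ys" using Cons.prems walk_Cons[OF False] by simp_all
    have "hd ys \<in> verts G" using w(3) False unfolding walk_def by (cases ys) auto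
    then have "f x \<le> f (hd ys) + 1" using H1 w by blast
    moreover have "f (hd ys) \<le> length ys - 1 + f (last ys)" using Cons.IH w(3) by blast
    ultimately show ?thesis using False by (cases ys) auto
  qed
qed

lemma dist_eq_f:
  assumes v: "v \<in> verts G" and u: "u \<in> verts G"
    and H1: "\<forall>x\<in>verts G. \<forall>y\<in>verts G. adj G x y \<longrightarrow> f x \<le> f y + (1::nat)"
    and H3: "\<forall>x\<in>verts G. 0 < f x \<longrightarrow> (\<exists>y\<in>verts G. adj G x y \<and> f y + 1 = f x)"
    and H4: "\<forall>x\<in>verts G. f x = 0 \<longrightarrow> x = v" and fv: "f v = 0"
  shows "dist G u v = f u"
proof -
  have ex: "\<forall>u\<in>verts G. f u = N \<longrightarrow> (\<exists>xs. walk G xs \<and> hd xs = u \<and> last xs = v \<and> length xs = Suc N)" for N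
  proof (induction N)
    case 0
    show ?case
    proof (intro ballI impI)
      fix u assume "u \<in> verts G" "f u = 0"
      then have "u = v" using H4 by blast
      then show "\<exists>xs. walk G xs \<and> hd xs = u \<and> last xs = v \<and> length xs = Suc 0"
        using v by (intro exI[of _ "[u]"]) (auto simp: walk_def)
    qed
  next
    case (Suc N)
    show ?case
    proof (intro ballI impI)
      fix u assume u: "u \<in> verts G" "f u = Suc N"
      then obtain y where y: "y \<in> verts G" "adj G u y" "f y + 1 = f u" using H3 by fastforce
      then have "f y = N" using u by simp
      then obtain ys where ys: "walk G ys" "hd ys = y" "last ys = v" "length ys = Suc N" using Suc.IH y by blast
      have "ys \<noteq> []" using ys by auto
      moreover have "u \<in> verts G \<and> adj G u (hd ys) \<and> walk G ys" using u y ys by simp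
      ultimately have "walk G (u # ys)" using walk_Cons[OF \<open>ys \<noteq> []\<close>] by simp
      then show "\<exists>xs. walk G xs \<and> hd xs = u \<and> last xs = v \<and> length xs = Suc (Suc N)"
        using ys \<open>ys \<noteq> []\<close> by (intro exI[of _ "u # ys"]) auto
    qed
  qed
  show ?thesis unfolding dist_def
  proof (rule Least_equality)
    show "\<exists>xs. walk G xs \<and> hd xs = u \<and> last xs = v \<and> length xs = Suc (f u)" using ex u by blast
  next
    fix N assume "\<exists>xs. walk G xs \<and> hd xs = u \<and> last xs = v \<and> length xs = Suc N"
    then obtain xs where xs: "walk G xs" "hd xs = u" "last xs = v" "length xs = Suc N" by blast
    then show "f u \<le> N" using walk_bound[OF xs(1) H1] fv by simp
  qed
qed

abbreviation GG :: "nat \<Rightarrow> nat \<Rightarrow> nat \<Rightarrow> ((nat \<times> nat) \<times> nat) graph" where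
  "GG n k m \<equiv> cart_prod (cart_prod (cycle_graph n) (path_graph k)) (path_graph m)"

lemma GG_verts: "verts (GG n k m) = VV n k m"
  by (simp add: cart_prod_def cycle_graph_def path_graph_def VV_def)

lemma GG_adj: "adj (GG n k m) ((a,b),c) ((a',b'),c') \<longleftrightarrow>
   (c = c' \<and> ((b = b' \<and> a < n \<and> a' < n \<and> a \<noteq> a' \<and> ((a + 1) mod n = a' \<or> (a' + 1) mod n = a)) \<or>
              (a = a' \<and> b < k \<and> b' < k \<and> (b + 1 = b' \<or> b' + 1 = b)))) \<or>
   (a = a' \<and> b = b' \<and> c < m \<and> c' < m \<and> (c + 1 = c' \<or> c' + 1 = c))"
  by (simp add: cart_prod_def cycle_graph_def path_graph_def)

context
  fixes n h k m :: nat
  assumes nh: "n = 2*h" and h2: "2 \<le> h" and k3: "3 \<le> k" and m2: "2 \<le> m"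
begin

lemma dist_GG:
  assumes x: "x \<in> VV n k m" and q: "q \<in> VV n k m"
  shows "dist (GG n k m) x q = DD n x q"
proof (rule dist_eq_f)
  obtain p u v where qe: "q = ((p,u),v)" by (metis prod.collapse)
  have qb: "p < n" "u < k" "v < m" using q qe by auto
  show "q \<in> verts (GG n k m)" "x \<in> verts (GG n k m)" using x q GG_verts by auto
  show "DD n q q = 0" using qe by (simp add: cd_self)
  show "\<forall>y\<in>verts (GG n k m). DD n y q = 0 \<longrightarrow> y = q"
  proof (intro ballI impI)
    fix y assume "y \<in> verts (GG n k m)" "DD n y q = 0"
    moreover obtain a b c where "y = ((a,b),c)" by (metis prod.collapse)
    ultimately have "cd n a p = 0" "ad b u = 0" "ad c v = 0" "a < n" using qe GG_verts by auto
    then show "y = q" using qe qb cd_zero[of a n p] \<open>y = ((a,b),c)\<close> by (auto simp: ad_def split: if_splits)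
  qed
  show "\<forall>y\<in>verts (GG n k m). \<forall>z\<in>verts (GG n k m). adj (GG n k m) y z \<longrightarrow> DD n y q \<le> DD n z q + 1"
  proof (intro ballI impI)
    fix y z assume yz: "y \<in> verts (GG n k m)" "z \<in> verts (GG n k m)" "adj (GG n k m) y z"
    obtain a b c where ye: "y = ((a,b),c)" by (metis prod.collapse)
    obtain a' b' c' where ze: "z = ((a',b'),c')" by (metis prod.collapse)
    have bnd: "a < n" "a' < n" using yz ye ze GG_verts by auto
    have ad1: "ad x1 y1 \<le> ad x2 y1 + 1" if "x1 + 1 = x2 \<or> x2 + 1 = x1" for x1 x2 y1
      using that by (auto simp: ad_def)
    consider (cyc) "c = c'" "b = b'" "(a + 1) mod n = a' \<or> (a' + 1) mod n = a"
      | (pb) "c = c'" "a = a'" "b + 1 = b' \<or> b' + 1 = b"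
      | (pc) "a = a'" "b = b'" "c + 1 = c' \<or> c' + 1 = c"
      using yz(3) ye ze GG_adj by auto
    then show "DD n y q \<le> DD n z q + 1"
    proof cases
      case cyc
      then have "a' = nx n a \<or> a = nx n a'" using nx_mod bnd by auto
      then have "cd n a p \<le> cd n a' p + 1"
        using cd_nx[OF nh h2 bnd(1) qb(1)] cd_nx[OF nh h2 bnd(2) qb(1)] by auto
      then show ?thesis using ye ze qe cyc by simp
    next
      case pb
      then show ?thesis using ye ze qe ad1[of b b' u] by simp
    next
      case pc
      then show ?thesis using ye ze qe ad1[of c c' v] by simp
    qed
  qed
  show "\<forall>y\<in>verts (GG n k m). 0 < DD n y q \<longrightarrow> (\<exists>z\<in>verts (GG n k m). adj (GG n k m) y z \<and> DD n z q + 1 = DD n y q)"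
  proof (intro ballI impI)
    fix y assume y: "y \<in> verts (GG n k m)" "0 < DD n y q"
    obtain a b c where ye: "y = ((a,b),c)" by (metis prod.collapse)
    have bnd: "a < n" "b < k" "c < m" using y ye GG_verts by auto
    have n3: "3 \<le> n" using nh h2 by simp
    show "\<exists>z\<in>verts (GG n k m). adj (GG n k m) y z \<and> DD n z q + 1 = DD n y q"
    proof (cases "a = p")
      case False
      have adjn: "adj (GG n k m) y ((nx n a, b), c)" "adj (GG n k m) y ((pv n a, b), c)"
        using ye GG_adj nx_mod[OF bnd(1)] pv_mod[OF bnd(1) pv_lt[OF bnd(1)]] nx_lt[OF bnd(1)] pv_lt[OF bnd(1)]
          nx_ne[OF _ bnd(1)] pv_ne[OF _ bnd(1)] n3 bnd by auto
      have vn: "((nx n a, b), c) \<in> verts (GG n k m)" "((pv n a, b), c) \<in> verts (GG n k m)"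
        using GG_verts nx_lt[OF bnd(1)] pv_lt[OF bnd(1)] bnd by auto
      have "p \<noteq> a" using False by simp
      from cd_closer[OF nh h2 bnd(1) qb(1) this]
      show ?thesis
      proof
        assume "cd n (nx n a) p + 1 = cd n a p"
        then show ?thesis using adjn(1) vn(1) ye qe by (intro bexI[of _ "((nx n a, b), c)"]) auto
      next
        assume "cd n (pv n a) p + 1 = cd n a p"
        then show ?thesis using adjn(2) vn(2) ye qe by (intro bexI[of _ "((pv n a, b), c)"]) auto
      qed
    next
      case ap: True
      show ?thesis
      proof (cases "b = u")
        case False
        define b' where "b' = (if b < u then b + 1 else b - 1)"
        have b': "b' < k" "b + 1 = b' \<or> b' + 1 = b" "ad b' u + 1 = ad b u"
          using False qb bnd b'_def by (auto simp: ad_def)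
        have "adj (GG n k m) y ((a, b'), c)" using ye GG_adj b' bnd by auto
        moreover have "((a, b'), c) \<in> verts (GG n k m)" using GG_verts b' bnd by auto
        ultimately show ?thesis using ye qe b' by (intro bexI[of _ "((a, b'), c)"]) auto
      next
        case bu: True
        then have "c \<noteq> v" using y ye qe ap by (auto simp: cd_self)
        define c' where "c' = (if c < v then c + 1 else c - 1)"
        have c': "c' < m" "c + 1 = c' \<or> c' + 1 = c" "ad c' v + 1 = ad c v"
          using \<open>c \<noteq> v\<close> qb bnd c'_def by (auto simp: ad_def)
        have "adj (GG n k m) y ((a, b), c')" using ye GG_adj c' bnd by auto
        moreover have "((a, b), c') \<in> verts (GG n k m)" using GG_verts c' bnd by auto
        ultimately show ?thesis using ye qe c' by (intro bexI[of _ "((a, b), c')"]) auto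
      qed
    qed
  qed
qed

end



lemma ad0: "ad b 0 = b" by (simp add: ad_def)
lemma adK: "b \<le> K \<Longrightarrow> ad b K = K - b" by (simp add: ad_def)

theorem theorem3p4:
  fixes n k m :: nat
  assumes "n \<ge> 4" and "even n" and "k \<ge> 3" and "m \<ge> 2"
  shows "metric_dim (cart_prod (cart_prod (cycle_graph n) (path_graph k)) (path_graph m)) = 4"
proof -
  obtain h where nh: "n = 2*h" using assms(2) by (auto elim: evenE)
  have h2: "2 \<le> h" using assms(1) nh by simp
  have k3: "3 \<le> k" and m2: "2 \<le> m" using assms by auto
  note dG = dist_GG[OF nh h2 k3 m2]
  define L1 where "L1 = ((0::nat,0::nat),0::nat)"
  define L2 where "L2 = ((0::nat,0::nat),m - 1)"
  define L3 where "L3 = ((0::nat,k - 1),0::nat)"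
  define L4 where "L4 = ((1::nat,0::nat),0::nat)"
  have LV: "L1 \<in> VV n k m" "L2 \<in> VV n k m" "L3 \<in> VV n k m" "L4 \<in> VV n k m"
    using nh h2 k3 m2 by (auto simp: L1_def L2_def L3_def L4_def)
  have res: "resolving_set (GG n k m) {L1,L2,L3,L4}"
    unfolding resolving_set_def
  proof (intro conjI ballI impI)
    show "{L1, L2, L3, L4} \<subseteq> verts (GG n k m)" using LV GG_verts by auto
    fix x y assume x: "x \<in> verts (GG n k m)" and y: "y \<in> verts (GG n k m)"
      and eq: "\<forall>q\<in>{L1, L2, L3, L4}. dist (GG n k m) x q = dist (GG n k m) y q"
    obtain a b c where xe: "x = ((a,b),c)" by (metis prod.collapse)
    obtain a' b' c' where ye: "y = ((a',b'),c')" by (metis prod.collapse)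
    have xv: "x \<in> VV n k m" and yv: "y \<in> VV n k m" using x y GG_verts by auto
    have bnd: "a < n" "b < k" "c < m" "a' < n" "b' < k" "c' < m" using xv yv xe ye by auto
    have D: "DD n x q = DD n y q" if "q \<in> {L1,L2,L3,L4}" for q
      using eq that dG[OF xv] dG[OF yv] LV by auto
    have E1: "cd n a 0 + b + c = cd n a' 0 + b' + c'"
      using D[of L1] xe ye by (simp add: L1_def ad0 adK)
    have E2: "cd n a 0 + b + (m - 1 - c) = cd n a' 0 + b' + (m - 1 - c')"
      using D[of L2] xe ye bnd by (simp add: L2_def ad0 adK)
    have E3: "cd n a 0 + (k - 1 - b) + c = cd n a' 0 + (k - 1 - b') + c'"
      using D[of L3] xe ye bnd by (simp add: L3_def ad0 adK)
    have E4: "cd n a 1 + b + c = cd n a' 1 + b' + c'"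
      using D[of L4] xe ye by (simp add: L4_def ad0 adK)
    have "c = c'" using E1 E2 bnd by arith
    moreover have "b = b'" using E1 E3 bnd by arith
    moreover have "a = a'"
    proof (rule cd_res[OF nh h2 bnd(1) bnd(4)])
      show "cd n a 0 = cd n a' 0" using E1 \<open>c = c'\<close> \<open>b = b'\<close> by simp
      show "cd n a 1 = cd n a' 1" using E4 \<open>c = c'\<close> \<open>b = b'\<close> by simp
    qed
    ultimately show "x = y" using xe ye by simp
  qed
  have card4: "card {L1,L2,L3,L4} = 4"
    using k3 m2 by (simp add: L1_def L2_def L3_def L4_def)
  have lower: "4 \<le> card Q" if fin: "finite Q" and rQ: "resolving_set (GG n k m) Q" for Q
  proof (rule ccontr)
    assume "\<not> 4 \<le> card Q"
    then have c3: "card Q \<le> 3" by simp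
    have QV: "Q \<subseteq> VV n k m" using rQ GG_verts unfolding resolving_set_def by auto
    have rr: "\<And>x y. x \<in> VV n k m \<Longrightarrow> y \<in> VV n k m \<Longrightarrow> (\<forall>q\<in>Q. dist (GG n k m) x q = dist (GG n k m) y q) \<Longrightarrow> x = y"
      using rQ GG_verts unfolding resolving_set_def by auto
    show False
    proof (cases "Q = {}")
      case True
      have "((0,0),0) = ((1::nat,0::nat),0::nat)"
        using rr[of "((0,0),0)" "((1,0),0)"] True nh h2 k3 m2 by simp
      then show False by simp
    next
      case False
      obtain xs where xs: "set xs = Q" "distinct xs" using finite_distinct_list[OF fin] by blast
      have len: "length xs \<le> 3" using distinct_card[OF xs(2)] xs(1) c3 by simp
      have "\<exists>s1 s2 s3. Q = {s1,s2,s3}"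
      proof (cases xs)
        case Nil
        then show ?thesis using False xs by simp
      next
        case (Cons a r)
        show ?thesis
        proof (cases r)
          case Nil
          then show ?thesis using Cons xs by (intro exI[of _ a]) auto
        next
          case (Cons b r2)
          show ?thesis
          proof (cases r2)
            case Nil
            then show ?thesis using \<open>xs = a # r\<close> Cons xs by (intro exI[of _ a] exI[of _ b]) auto
          next
            case (Cons c r3)
            then have "r3 = []" using len \<open>xs = a # r\<close> \<open>r = b # r2\<close> by simp
            then have "Q = {a,b,c}" using \<open>xs = a # r\<close> \<open>r = b # r2\<close> Cons xs(1) by auto
            then show ?thesis by blast
          qed
        qed
      qed
      then obtain s1 s2 s3 where Qe: "Q = {s1,s2,s3}" by blast
      have sv: "s1 \<in> VV n k m" "s2 \<in> VV n k m" "s3 \<in> VV n k m" using QV Qe by auto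
      have "collS n k m {s1,s2,s3}" by (rule comb[OF nh h2 k3 m2 sv])
      then obtain x y where xy: "x \<in> VV n k m" "y \<in> VV n k m" "x \<noteq> y" "\<forall>s\<in>{s1,s2,s3}. DD n x s = DD n y s"
        unfolding collS_def by blast
      have "\<forall>q\<in>Q. dist (GG n k m) x q = dist (GG n k m) y q"
        using xy dG QV Qe by auto
      then show False using rr[OF xy(1,2)] xy(3) by blast
    qed
  qed
  show ?thesis unfolding metric_dim_def
  proof (rule Least_equality)
    show "\<exists>Q. finite Q \<and> card Q = 4 \<and> resolving_set (GG n k m) Q"
      using res card4 by (intro exI[of _ "{L1,L2,L3,L4}"]) auto
  next
    fix l assume "\<exists>Q. finite Q \<and> card Q = l \<and> resolving_set (GG n k m) Q"
    then show "4 \<le> l" using lower by blast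
  qed
qed



end
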